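(* Under the standing assumptions, writing (R1) for $\mathscr{R}(A^*AB)=\mathscr{R}(B)$ and (R2) for $\mathscr{R}(CC^*B^* )=\mathscr{R}(B^* )$, the following hold. (49) $\{M^{(1,3,4)}\}\subseteq\{C^{-1}B^{(1)}A^{-1}\}$; and $\{M^{(1,3,4)}\}\supseteq\{C^{-1}B^{(1)}A^{-1}\}\Leftrightarrow\{M^{(1,3,4)}\}=\{C^{-1}B^{(1)}A^{-1}\}\Leftrightarrow B=0$ or $r(B)=m=n$. (50) $\{M^{(1,3,4)}\}\cap\{C^{-1}B^{(1,2)}A^{-1}\}\neq\emptyset$; $\{M^{(1,3,4)}\}\supseteq\{C^{-1}B^{(1,2)}A^{-1}\}\Leftrightarrow B=0$ or $r(B)=m=n$; $\{M^{(1,3,4)}\}\subseteq\{C^{-1}B^{(1,2)}A^{-1}\}\Leftrightarrow r(B)=m$ or $r(B)=n$; $\{M^{(1,3,4)}\}=\{C^{-1}B^{(1,2)}A^{-1}\}\Leftrightarrow r(B)=m=n$. (51) $\{M^{(1,3,4)}\}\cap\{C^{-1}B^{(1,3)}A^{-1}\}\neq\emptyset\Leftrightarrow\{M^{(1,3,4)}\}\subseteq\{C^{-1}B^{(1,3)}A^{-1}\}\Leftrightarrow$ (R1); and $\{M^{(1,3,4)}\}\supseteq\{C^{-1}B^{(1,3)}A^{-1}\}\Leftrightarrow\{M^{(1,3,4)}\}=\{C^{-1}B^{(1,3)}A^{-1}\}\Leftrightarrow B=0$ or ($r(B)=n$ and (R1)). (52) $\{M^{(1,3,4)}\}\cap\{C^{-1}B^{(1,4)}A^{-1}\}\neq\emptyset\Leftrightarrow\{M^{(1,3,4)}\}\subseteq\{C^{-1}B^{(1,4)}A^{-1}\}\Leftrightarrow$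 (R2); and $\{M^{(1,3,4)}\}\supseteq\{C^{-1}B^{(1,4)}A^{-1}\}\Leftrightarrow\{M^{(1,3,4)}\}=\{C^{-1}B^{(1,4)}A^{-1}\}\Leftrightarrow B=0$ or ($r(B)=m$ and (R2)). (53) $\{M^{(1,3,4)}\}\cap\{C^{-1}B^{(1,2,3)}A^{-1}\}\neq\emptyset\Leftrightarrow$ (R1); $\{M^{(1,3,4)}\}\supseteq\{C^{-1}B^{(1,2,3)}A^{-1}\}\Leftrightarrow B=0$ or ($r(B)=n$ and (R1)); $\{M^{(1,3,4)}\}\subseteq\{C^{-1}B^{(1,2,3)}A^{-1}\}\Leftrightarrow$ (R1) and $r(B)=\min\{m,n\}$; $\{M^{(1,3,4)}\}=\{C^{-1}B^{(1,2,3)}A^{-1}\}\Leftrightarrow r(B)=n$ and (R1). (54) $\{M^{(1,3,4)}\}\cap\{C^{-1}B^{(1,2,4)}A^{-1}\}\neq\emptyset\Leftrightarrow$ (R2); $\{M^{(1,3,4)}\}\supseteq\{C^{-1}B^{(1,2,4)}A^{-1}\}\Leftrightarrow B=0$ or ($r(B)=m$ and (R2)); $\{M^{(1,3,4)}\}\subseteq\{C^{-1}B^{(1,2,4)}A^{-1}\}\Leftrightarrow$ (R2) and $r(B)=\min\{m,n\}$; $\{M^{(1,3,4)}\}=\{C^{-1}B^{(1,2,4)}A^{-1}\}\Leftrightarrow r(B)=m$ and (R2). (55) $\{M^{(1,3,4)}\}\cap\{C^{-1}B^{(1,3,4)}A^{-1}\}\neq\emptyset\Leftrightarrow\{M^{(1,3,4)}\}=\{C^{-1}B^{(1,3,4)}A^{-1}\}\Leftrightarrow$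 (R1) and (R2). (56) $C^{-1}B^\dagger A^{-1}\in\{M^{(1,3,4)}\}\Leftrightarrow$ (R1) and (R2).
   Context: Standing assumptions: $m,n\ge1$; $A\in\mathbb{C}^{m\times m}$ and $C\in\mathbb{C}^{n\times n}$ are nonsingular; $B\in\mathbb{C}^{m\times n}$; $M=ABC$. For a complex matrix $X$, $X^*$ is its conjugate transpose, $r(X)$ its rank and $\mathscr{R}(X)$ its column space. For $X\in\mathbb{C}^{p\times q}$, a matrix $G\in\mathbb{C}^{q\times p}$ is called an $\{i,\ldots,j\}$-generalized inverse of $X$ (written $X^{(i,\ldots,j)}$) if it satisfies the equations numbered $i,\ldots,j$ among the four Penrose equations (i) $XGX=X$, (ii) $GXG=G$, (iii) $(XG)^*=XG$, (iv) $(GX)^*=GX$; $\{X^{(i,\ldots,j)}\}$ denotes the set of all such $G$. The Moore–Penrose inverse $X^\dagger$ is the unique matrix satisfying all four equations. For a type $(k,\ldots,l)$, $\{C^{-1}B^{(k,\ldots,l)}A^{-1}\}:=\{C^{-1}GA^{-1}: G\in\{B^{(k,\ldots,l)}\}\}$. *)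

theory Defs
  imports "HOL-Analysis.Analysis"
begin

text \<open>Matrices: an m x n complex matrix is \<open>complex^'n^'m\<close>, with m = CARD('m), n = CARD('n).\<close>

definition adj :: "complex^'n^'m \<Rightarrow> complex^'m^'n" where
  "adj X = (\<chi> i j. cnj (X $ j $ i))"

definition colspace :: "complex^'n^'m \<Rightarrow> (complex^'m) set" where
  "colspace X = range (\<lambda>x. X *v x)"

definition ginv :: "nat set \<Rightarrow> complex^'n^'m \<Rightarrow> (complex^'m^'n) set" where
  "ginv S X = {G. (1 \<in> S \<longrightarrow> X ** G ** X = X) \<and>
                  (2 \<in> S \<longrightarrow> G ** X ** G = G) \<and>
                  (3 \<in> S \<longrightarrow> adj (X ** G) = X ** G) \<and>
                  (4 \<in> S \<longrightarrow> adj (G ** X) = G ** X)}"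

definition mpinv :: "complex^'n^'m \<Rightarrow> complex^'m^'n" where
  "mpinv X = (THE G. G \<in> ginv {1,2,3,4} X)"

definition tset :: "complex^'m^'m \<Rightarrow> complex^'n^'m \<Rightarrow> complex^'n^'n \<Rightarrow> nat set \<Rightarrow> (complex^'m^'n) set" where
  "tset A B C S = (\<lambda>G. matrix_inv C ** G ** matrix_inv A) ` ginv S B"

end

theory Submission
  imports Defs
begin

lemma adj_nth[simp]: "adj X $ i $ j = cnj (X $ j $ i)"
  by (simp add: adj_def)

lemma adj_adj[simp]: "adj (adj X) = X"
  by (simp add: vec_eq_iff)

lemma adj_mult: "adj (X ** Y) = adj Y ** adj X"
  by (simp add: vec_eq_iff matrix_matrix_mult_def mult.commute)

lemma adj_add: "adj (X + Y) = adj X + adj Y"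
  by (simp add: vec_eq_iff)

lemma adj_diff: "adj (X - Y) = adj X - adj Y"
  by (simp add: vec_eq_iff)

lemma adj_mat[simp]: "adj (mat k) = mat (cnj k)"
  by (simp add: vec_eq_iff mat_def)

lemma adj_zero[simp]: "adj 0 = 0"
  by (simp add: vec_eq_iff)

lemma adj_eq_iff[simp]: "adj X = adj Y \<longleftrightarrow> X = Y"
  by (metis adj_adj)

lemma matrix_diff_ldistrib: "(A::'a::ring_1^'n^'m) ** (B - C) = A ** B - A ** C"
  by (simp add: vec_eq_iff matrix_matrix_mult_def sum_subtractf right_diff_distrib)

lemma matrix_diff_rdistrib: "((B::'a::ring_1^'n^'m) - C) ** A = B ** A - C ** A"
  by (simp add: vec_eq_iff matrix_matrix_mult_def sum_subtractf left_diff_distrib)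

lemma matrix_add_rdistrib': "((B::'a::ring_1^'n^'m) + C) ** A = B ** A + C ** A"
  by (simp add: vec_eq_iff matrix_matrix_mult_def sum.distrib distrib_right)

lemma adj_mult_self_zero:
  fixes Z :: "complex^'n^'m"
  assumes "adj Z ** Z = 0" shows "Z = 0"
proof -
  have "\<forall>j. \<forall>i. Z $ i $ j = 0"
  proof
    fix j
    have "(adj Z ** Z) $ j $ j = (\<Sum>i\<in>UNIV. Z $ i $ j * cnj (Z $ i $ j))"
      by (simp add: matrix_matrix_mult_def mult.commute)
    also have "\<dots> = complex_of_real (\<Sum>i\<in>UNIV. (cmod (Z $ i $ j))\<^sup>2)"
      by (simp add: complex_mult_cnj cmod_power2)
    finally have X: "(adj Z ** Z) $ j $ j = complex_of_real (\<Sum>i\<in>UNIV. (cmod (Z $ i $ j))\<^sup>2)" .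
    have "complex_of_real (\<Sum>i\<in>UNIV. (cmod (Z $ i $ j))\<^sup>2) = 0" using X assms by (metis zero_index)
    hence "(\<Sum>i\<in>UNIV. (cmod (Z $ i $ j))\<^sup>2) = 0" using of_real_eq_0_iff by blast
    then have "\<forall>i\<in>UNIV. (cmod (Z $ i $ j))\<^sup>2 = 0"
      by (subst (asm) sum_nonneg_eq_0_iff) auto
    then show "\<forall>i. Z $ i $ j = 0" by simp
  qed
  then show ?thesis by (simp add: vec_eq_iff)
qed

lemma adj_cancel_left:
  fixes X :: "complex^'n^'m" and Y Z :: "complex^'p^'n"
  assumes "adj X ** X ** Y = adj X ** X ** Z" shows "X ** Y = X ** Z"
proof -
  let ?D = "Y - Z"
  have "adj X ** X ** ?D = 0" using assms by (simp add: matrix_diff_ldistrib)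
  hence "adj ?D ** (adj X ** X ** ?D) = 0" by simp
  hence "adj (X ** ?D) ** (X ** ?D) = 0" by (simp add: adj_mult matrix_mul_assoc)
  hence "X ** ?D = 0" by (rule adj_mult_self_zero)
  thus ?thesis by (simp add: matrix_diff_ldistrib)
qed

lemma adj_cancel_right:
  fixes X :: "complex^'n^'m" and Y Z :: "complex^'m^'p"
  assumes "Y ** X ** adj X = Z ** X ** adj X" shows "Y ** X = Z ** X"
proof -
  have "adj (Y ** X ** adj X) = adj (Z ** X ** adj X)" using assms by simp
  hence "X ** adj X ** adj Y = X ** adj X ** adj Z" by (simp add: adj_mult matrix_mul_assoc)
  hence "adj X ** adj Y = adj X ** adj Z" using adj_cancel_left[of "adj X"] by simp
  hence "adj (Y ** X) = adj (Z ** X)" by (simp add: adj_mult)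
  thus ?thesis by simp
qed


lemma exists_g1:
  fixes X :: "'a::field^'n^'m"
  shows "\<exists>G. X ** G ** X = X"
proof -
  obtain g where lg: "Vector_Spaces.linear (*s) (*s) g" and g: "\<forall>v\<in>(*v) X ` UNIV. X *v (g v) = v"
    using vec.linear_exists_right_inverse_on[OF matrix_vector_mul_linear_gen[of X] vec.subspace_UNIV]
    by blast
  have "(X ** matrix g ** X) *v x = X *v x" for x
    by (simp add: matrix_vector_mul_assoc[symmetric] matrix_works[OF lg] g)
  hence "X ** matrix g ** X = X" by (simp add: matrix_eq)
  thus ?thesis by blast
qed

lemma exists_g13:
  fixes X :: "complex^'n^'m"
  shows "\<exists>G. X ** G ** X = X \<and> adj (X ** G) = X ** G"
proof -
  obtain G1 where G1: "adj X ** X ** G1 ** (adj X ** X) = adj X ** X"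
    using exists_g1[of "adj X ** X"] by blast
  have G1a: "adj X ** X ** adj G1 ** (adj X ** X) = adj X ** X"
    using arg_cong[OF G1, of adj] by (simp add: adj_mult matrix_mul_assoc)
  have e1: "X ** G1 ** adj X ** X = X"
    using adj_cancel_left[of X "G1 ** adj X ** X" "mat 1"] G1 by (simp add: matrix_mul_assoc)
  have e2: "X ** adj G1 ** adj X ** X = X"
    using adj_cancel_left[of X "adj G1 ** adj X ** X" "mat 1"] G1a by (simp add: matrix_mul_assoc)
  have e2': "adj X ** X ** G1 ** adj X = adj X"
    using arg_cong[OF e2, of adj] by (simp add: adj_mult matrix_mul_assoc)
  have "adj (X ** (G1 ** adj X)) = X ** adj G1 ** adj X"
    by (simp add: adj_mult matrix_mul_assoc)
  also have "\<dots> = X ** adj G1 ** (adj X ** X ** G1 ** adj X)" using e2' by simp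
  also have "\<dots> = (X ** adj G1 ** adj X ** X) ** G1 ** adj X" by (simp add: matrix_mul_assoc)
  also have "\<dots> = X ** (G1 ** adj X)" using e2 by (simp add: matrix_mul_assoc)
  finally show ?thesis using e1 by (metis matrix_mul_assoc)
qed

lemma exists_mp:
  fixes X :: "complex^'n^'m"
  shows "\<exists>G. G \<in> ginv {1,2,3,4} X"
proof -
  obtain G3 where G3: "X ** G3 ** X = X" "adj (X ** G3) = X ** G3" using exists_g13 by blast
  obtain Y where Y: "adj X ** Y ** adj X = adj X" "adj (adj X ** Y) = adj X ** Y" using exists_g13 by blast
  define G4 where "G4 = adj Y"
  have G4: "X ** G4 ** X = X" "adj (G4 ** X) = G4 ** X"
    using arg_cong[OF Y(1), of adj] Y(2) by (auto simp: G4_def adj_mult matrix_mul_assoc)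
  define Z where "Z = G4 ** X ** G3"
  have "X ** Z ** X = X" unfolding Z_def by (metis G3(1) G4(1) matrix_mul_assoc)
  moreover have "Z ** X ** Z = Z" unfolding Z_def by (metis G3(1) G4(1) matrix_mul_assoc)
  moreover have "X ** Z = X ** G3" unfolding Z_def by (metis G4(1) matrix_mul_assoc)
  moreover have "Z ** X = G4 ** X" unfolding Z_def by (metis G3(1) matrix_mul_assoc)
  ultimately have "Z \<in> ginv {1,2,3,4} X" using G3 G4 by (simp add: ginv_def)
  thus ?thesis by blast
qed

lemma mp_unique:
  fixes X :: "complex^'n^'m"
  assumes "G \<in> ginv {1,2,3,4} X" "H \<in> ginv {1,2,3,4} X"
  shows "G = H"
proof -
  have g: "X ** G ** X = X" "G ** X ** G = G" "adj (X ** G) = X ** G" "adj (G ** X) = G ** X"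
    and h: "X ** H ** X = X" "H ** X ** H = H" "adj (X ** H) = X ** H" "adj (H ** X) = H ** X"
    using assms by (auto simp: ginv_def)
  have xg: "X ** G = X ** H"
  proof -
    have "X ** G = adj (X ** H ** X ** G)" using g(3) h(1) by simp
    also have "\<dots> = adj (X ** G) ** adj (X ** H)" by (simp add: adj_mult matrix_mul_assoc)
    also have "\<dots> = X ** G ** X ** H" using g(3) h(3) by (simp add: matrix_mul_assoc)
    also have "\<dots> = X ** H" using g(1) by simp
    finally show ?thesis .
  qed
  have gx: "G ** X = H ** X"
  proof -
    have "G ** X = adj (G ** X ** H ** X)" using g(4) h(1) by (metis matrix_mul_assoc)
    also have "\<dots> = adj (H ** X) ** adj (G ** X)" by (simp add: adj_mult matrix_mul_assoc)
    also have "\<dots> = H ** X ** G ** X" using g(4) h(4) by (simp add: matrix_mul_assoc)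
    also have "\<dots> = H ** X" using g(1) by (metis matrix_mul_assoc)
    finally show ?thesis .
  qed
  have "G = G ** X ** G" using g(2) by simp
  also have "\<dots> = H ** X ** H" using xg gx by (metis matrix_mul_assoc)
  also have "\<dots> = H" using h(2) .
  finally show ?thesis .
qed

lemma mpinv_ginv: "mpinv X \<in> ginv {1,2,3,4} X"
proof -
  obtain G where G: "G \<in> ginv {1,2,3,4} X" using exists_mp by blast
  have "mpinv X = G" unfolding mpinv_def
    by (rule the_equality) (use G mp_unique in auto)
  thus ?thesis using G by simp
qed

lemma mpinv_props:
  "X ** mpinv X ** X = X" "mpinv X ** X ** mpinv X = mpinv X"
  "adj (X ** mpinv X) = X ** mpinv X" "adj (mpinv X ** X) = mpinv X ** X"
  using mpinv_ginv[of X] by (auto simp: ginv_def)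


lemma rows_range: "rows X = range (\<lambda>i. row i X)"
  by (auto simp: rows_def)

lemma rank_le_cols: "rank (X::'a::field^'n^'m) \<le> CARD('n)"
  unfolding row_rank_def_gen by (rule dim_subset_UNIV_cart_gen)

lemma rank_le_rows: "rank (X::'a::field^'n^'m) \<le> CARD('m)"
proof -
  have "vec.dim (rows X) \<le> card (rows X)"
    by (rule vec.dim_le_card) (auto simp: rows_range intro: vec.span_base)
  also have "\<dots> \<le> CARD('m)" unfolding rows_range by (rule card_image_le) simp
  finally show ?thesis unfolding row_rank_def_gen .
qed

lemma rank_full_cols: "rank (X::'a::field^'n^'m) = CARD('n) \<longleftrightarrow> (\<exists>L. L ** X = mat 1)"
proof -
  have d: "vec.dim (UNIV::('a^'n) set) = CARD('n)" by (rule vec_dim_card)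
  have "vec.dim (rows X) = CARD('n) \<longleftrightarrow> vec.span (rows X) = UNIV"
  proof
    assume "vec.dim (rows X) = CARD('n)"
    hence "vec.span (rows X) = vec.span UNIV" using d by (intro vec.dim_eq_span) auto
    thus "vec.span (rows X) = UNIV" by simp
  next
    assume "vec.span (rows X) = UNIV"
    hence "vec.dim (vec.span (rows X)) = CARD('n)" using d by simp
    thus "vec.dim (rows X) = CARD('n)" by simp
  qed
  thus ?thesis
    unfolding matrix_left_invertible_span_rows_gen row_rank_def_gen .
qed

lemma rank_full_rows: "rank (X::'a::field^'n^'m) = CARD('m) \<longleftrightarrow> (\<exists>R. X ** R = mat 1)"
proof
  assume "\<exists>R. X ** R = mat 1"
  then obtain R where R: "X ** R = mat 1" by blast
  have fam: "\<forall>c. (\<Sum>i\<in>UNIV. c i *s row i X) = 0 \<longrightarrow> (\<forall>i. c i = 0)"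
    using matrix_right_invertible_independent_rows[of X] R by blast
  have inj: "inj (\<lambda>i. row i X)"
  proof (rule injI)
    fix i j assume "row i X = row j X"
    hence "X $ i = X $ j" by (simp add: row_def vec_eq_iff)
    hence "(X ** R) $ i = (X ** R) $ j" by (simp add: matrix_matrix_mult_def)
    hence "mat 1 $ i $ i = (mat 1 :: 'a^'m^'m) $ j $ i" using R by simp
    thus "i = j" by (simp add: mat_def split: if_splits)
  qed
  have ind: "vec.independent (rows X)"
  proof
    assume "vec.dependent (rows X)"
    then obtain u where u: "\<exists>v\<in>rows X. u v \<noteq> 0" "(\<Sum>v\<in>rows X. u v *s v) = 0"
      using vec.dependent_finite[of "rows X"] by (auto simp: rows_range)
    have "(\<Sum>i\<in>UNIV. u (row i X) *s row i X) = 0"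
      using u(2) unfolding rows_range by (simp add: sum.reindex[OF inj])
    hence "\<forall>i. u (row i X) = 0" using fam[rule_format, of "\<lambda>i. u (row i X)"] by blast
    thus False using u(1) by (auto simp: rows_range)
  qed
  have "vec.dim (rows X) = card (rows X)" by (rule vec.dim_eq_card_independent[OF ind])
  also have "\<dots> = CARD('m)" unfolding rows_range using card_image[OF inj] by simp
  finally show "rank X = CARD('m)" unfolding row_rank_def_gen .
next
  assume rk: "rank X = CARD('m)"
  have fin: "finite (rows X)" by (simp add: rows_range)
  have le1: "vec.dim (rows X) \<le> card (rows X)"
    by (rule vec.dim_le_card) (auto simp: rows_range intro: vec.span_base)
  have le2: "card (rows X) \<le> CARD('m)" unfolding rows_range by (rule card_image_le) simp
  have eq: "card (rows X) = vec.dim (rows X)" using rk le1 le2 unfolding row_rank_def_gen by simp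
  have ind: "vec.independent (rows X)"
    using vec.card_eq_dim[of "rows X" "rows X"] eq fin vec.span_superset by blast
  have inj: "inj (\<lambda>i. row i X)"
    using eq rk le1 unfolding row_rank_def_gen rows_range
    by (intro eq_card_imp_inj_on) auto
  have "\<forall>c. (\<Sum>i\<in>UNIV. c i *s row i X) = 0 \<longrightarrow> (\<forall>i. c i = 0)"
  proof (intro allI impI)
    fix c i assume s: "(\<Sum>i\<in>UNIV. c i *s row i X) = 0"
    define u where "u v = c (the_inv (\<lambda>i. row i X) v)" for v
    have u: "u (row i X) = c i" for i unfolding u_def by (simp add: the_inv_f_f[OF inj])
    have "(\<Sum>v\<in>rows X. u v *s v) = 0"
      unfolding rows_range using s by (simp add: sum.reindex[OF inj] u)
    hence "\<forall>v\<in>rows X. u v = 0" using ind fin vec.dependent_finite by blast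
    thus "c i = 0" using u[of i] by (auto simp: rows_range)
  qed
  thus "\<exists>R. X ** R = mat 1" using matrix_right_invertible_independent_rows[of X] by blast
qed


lemma zeroW:
  fixes X :: "complex^'q^'p" and Y :: "complex^'s^'r"
  assumes "\<And>W::complex^'r^'q. X ** W ** Y = 0"
  shows "X = 0 \<or> Y = 0"
proof (rule ccontr)
  assume "\<not> (X = 0 \<or> Y = 0)"
  then obtain i j k l where x: "X $ i $ j \<noteq> 0" and y: "Y $ k $ l \<noteq> 0"
    by (metis vec_eq_iff zero_index)
  define W :: "complex^'r^'q" where "W = (\<chi> a b. if a = j \<and> b = k then 1 else 0)"
  have xw: "(X ** W) $ i $ b = (if b = k then X $ i $ j else 0)" for b
  proof -
    have mi: "\<And>a c. a * (if c then (1::complex) else 0) = (if c then a else 0)" by simp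
    show ?thesis by (cases "b = k") (simp_all add: W_def matrix_matrix_mult_def mi)
  qed
  have mm: "(Z ** Y) $ i $ l = (\<Sum>b\<in>UNIV. Z $ i $ b * Y $ b $ l)" for Z :: "complex^'r^'p"
    by (simp add: matrix_matrix_mult_def)
  have mi2: "\<And>a y c. (if c then a else (0::complex)) * y = (if c then a * y else 0)" by simp
  have "(X ** W ** Y) $ i $ l = X $ i $ j * Y $ k $ l"
    unfolding mm xw mi2 by simp
  thus False using assms[of W] x y by simp
qed

lemma herm_eq1:
  fixes X Y :: "complex^'n^'n"
  assumes "adj X = X" "adj Y = Y" "X ** Y = Y" "Y ** X = X"
  shows "X = Y"
  by (metis adj_mult assms)

lemma herm_eq2:
  fixes X Y :: "complex^'n^'n"
  assumes "adj X = X" "adj Y = Y" "X ** Y = X" "Y ** X = Y"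
  shows "X = Y"
  by (metis adj_mult assms)

lemma colspace_mult: "colspace (X ** Z) \<subseteq> colspace X"
  by (auto simp: colspace_def matrix_vector_mul_assoc[symmetric])

lemma herm_conj_comm:
  fixes A Ai E :: "complex^'m^'m"
  assumes AAi: "A ** Ai = mat 1" "Ai ** A = mat 1" and E: "adj E = E"
  shows "adj (A ** E ** Ai) = A ** E ** Ai \<longleftrightarrow> adj A ** A ** E = E ** (adj A ** A)"
proof -
  have a1: "adj Ai ** adj A = mat 1" "adj A ** adj Ai = mat 1"
    using arg_cong[OF AAi(1), of adj] arg_cong[OF AAi(2), of adj] by (simp_all add: adj_mult)
  have adjE: "adj (A ** E ** Ai) = adj Ai ** E ** adj A" using E by (simp add: adj_mult matrix_mul_assoc)
  show ?thesis
  proof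
    assume h: "adj (A ** E ** Ai) = A ** E ** Ai"
    have "E ** (adj A ** A) = adj A ** (adj Ai ** E ** adj A) ** A"
      using a1 by (simp add: matrix_mul_assoc)
    also have "\<dots> = adj A ** (A ** E ** Ai) ** A" using h adjE by simp
    also have "\<dots> = adj A ** A ** E" using AAi by (metis matrix_mul_assoc matrix_mul_rid)
    finally show "adj A ** A ** E = E ** (adj A ** A)" by simp
  next
    assume h: "adj A ** A ** E = E ** (adj A ** A)"
    have "adj (A ** E ** Ai) = adj Ai ** (E ** (adj A ** A)) ** Ai"
      using adjE AAi by (simp add: matrix_mul_assoc[symmetric])
    also have "\<dots> = adj Ai ** (adj A ** A ** E) ** Ai" using h by simp
    also have "\<dots> = A ** E ** Ai" using a1 by (metis matrix_mul_assoc matrix_mul_lid)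
    finally show "adj (A ** E ** Ai) = A ** E ** Ai" .
  qed
qed

lemma comm_colspace:
  fixes X :: "complex^'n^'m" and Xp :: "complex^'m^'n" and K Ki :: "complex^'m^'m"
  assumes X: "X ** Xp ** X = X" "adj (X ** Xp) = X ** Xp"
    and K: "adj K = K" "K ** Ki = mat 1" "Ki ** K = mat 1"
  shows "K ** (X ** Xp) = (X ** Xp) ** K \<longleftrightarrow> colspace (K ** X) = colspace X"
proof
  assume c: "K ** (X ** Xp) = (X ** Xp) ** K"
  have "K ** X = K ** (X ** Xp) ** X" using X(1) by (simp add: matrix_mul_assoc[symmetric])
  also have "\<dots> = X ** (Xp ** K ** X)" using c by (simp add: matrix_mul_assoc)
  finally have s1: "colspace (K ** X) \<subseteq> colspace X" using colspace_mult by metis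
  have c2: "(X ** Xp) ** Ki = Ki ** (X ** Xp)"
  proof -
    have "(X ** Xp) ** Ki = Ki ** (K ** (X ** Xp)) ** Ki" using K by (simp add: matrix_mul_assoc)
    also have "\<dots> = Ki ** (X ** Xp) ** (K ** Ki)" using c by (simp add: matrix_mul_assoc)
    finally show ?thesis using K by simp
  qed
  have "X = K ** (Ki ** (X ** Xp) ** X)" using K X(1) by (simp add: matrix_mul_assoc)
  also have "\<dots> = K ** X ** (Xp ** Ki ** X)" using c2 by (metis matrix_mul_assoc)
  finally have s2: "colspace X \<subseteq> colspace (K ** X)" using colspace_mult by metis
  show "colspace (K ** X) = colspace X" using s1 s2 by blast
next
  assume cs: "colspace (K ** X) = colspace X"
  let ?E = "X ** Xp"
  have "(?E ** (K ** X)) *v v = (K ** X) *v v" for v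
  proof -
    have "(K ** X) *v v \<in> colspace X" using cs by (auto simp: colspace_def)
    then obtain y where y: "(K ** X) *v v = X *v y" by (auto simp: colspace_def)
    have y': "K *v (X *v v) = X *v y" using y by (simp add: matrix_vector_mul_assoc)
    have "(?E ** (K ** X)) *v v = ?E *v (X *v y)" by (simp add: matrix_vector_mul_assoc[symmetric] y')
    also have "\<dots> = X *v y" using X(1) by (simp add: matrix_vector_mul_assoc)
    finally show ?thesis using y by simp
  qed
  hence e1: "?E ** (K ** X) = K ** X" by (simp add: matrix_eq)
  have e2: "?E ** K ** ?E = K ** ?E"
    using arg_cong[OF e1, of "\<lambda>Z. Z ** Xp"] by (simp add: matrix_mul_assoc)
  have "?E ** K = adj (K ** ?E)" using X(2) K(1) by (simp add: adj_mult)
  also have "\<dots> = adj (?E ** K ** ?E)" using e2 by simp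
  also have "\<dots> = ?E ** K ** ?E" using X(2) K(1) by (simp add: adj_mult matrix_mul_assoc)
  finally show "K ** (X ** Xp) = (X ** Xp) ** K" using e2 by simp
qed


lemma matrix_inv_props:
  assumes "invertible (X::'a::semiring_1^'n^'n)"
  shows "X ** matrix_inv X = mat 1" "matrix_inv X ** X = mat 1"
proof -
  have "X ** matrix_inv X = mat 1 \<and> matrix_inv X ** X = mat 1"
    using assms unfolding matrix_inv_def invertible_def by (rule someI_ex)
  thus "X ** matrix_inv X = mat 1" "matrix_inv X ** X = mat 1" by auto
qed

locale thm_ctx =
  fixes A :: "complex^'m^'m" and B :: "complex^'n^'m" and C :: "complex^'n^'n"
  assumes invA: "invertible A" and invC: "invertible C"
begin

definition "M = A ** B ** C"
definition "Ai = matrix_inv A"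
definition "Ci = matrix_inv C"
definition "Mp = mpinv M"
definition "P = M ** Mp"
definition "Q = Mp ** M"
definition "Bp = mpinv B"
definition "G0 = Ci ** Bp ** Ai"
definition "h3 G \<longleftrightarrow> adj (Ai ** (M ** G) ** A) = Ai ** (M ** G) ** A"
definition "h4 G \<longleftrightarrow> adj (C ** (G ** M) ** Ci) = C ** (G ** M) ** Ci"
definition "T (S::nat set) = {G. (1 \<in> S \<longrightarrow> M ** G ** M = M) \<and> (2 \<in> S \<longrightarrow> G ** M ** G = G)
                      \<and> (3 \<in> S \<longrightarrow> h3 G) \<and> (4 \<in> S \<longrightarrow> h4 G)}"
definition "H = ginv {1,3,4} M"
definition "r1 \<longleftrightarrow> adj (Ai ** P ** A) = Ai ** P ** A"
definition "r2 \<longleftrightarrow> adj (C ** Q ** Ci) = C ** Q ** Ci"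

lemma AAi: "A ** Ai = mat 1" "Ai ** A = mat 1" "C ** Ci = mat 1" "Ci ** C = mat 1"
  using matrix_inv_props[OF invA] matrix_inv_props[OF invC] by (auto simp: Ai_def Ci_def)

lemma inv_rules:
  "X ** A ** Ai = X" "X ** Ai ** A = X" "Y ** C ** Ci = Y" "Y ** Ci ** C = Y"
  using AAi by (metis matrix_mul_assoc matrix_mul_rid)+

lemmas isimps = AAi inv_rules matrix_mul_assoc

lemma T_mem: "G \<in> T S \<longleftrightarrow> (1 \<in> S \<longrightarrow> M ** G ** M = M) \<and> (2 \<in> S \<longrightarrow> G ** M ** G = G)
                      \<and> (3 \<in> S \<longrightarrow> h3 G) \<and> (4 \<in> S \<longrightarrow> h4 G)"
  by (simp add: T_def)

lemma cancelAC: "A ** X ** C = A ** Y ** C \<Longrightarrow> X = Y"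
proof -
  assume h: "A ** X ** C = A ** Y ** C"
  have "Ai ** (A ** X ** C) ** Ci = Ai ** (A ** Y ** C) ** Ci" using h by simp
  thus "X = Y" by (simp add: isimps)
qed

lemma cancelCA: "Ci ** X ** Ai = Ci ** Y ** Ai \<Longrightarrow> X = Y"
proof -
  assume h: "Ci ** X ** Ai = Ci ** Y ** Ai"
  have "C ** (Ci ** X ** Ai) ** A = C ** (Ci ** Y ** Ai) ** A" using h by simp
  thus "X = Y" by (simp add: isimps)
qed

lemma transfer:
  fixes N :: "complex^'m^'n"
  defines "G \<equiv> Ci ** N ** Ai"
  shows "M ** G ** M = A ** (B ** N ** B) ** C"
    "G ** M ** G = Ci ** (N ** B ** N) ** Ai"
    "Ai ** (M ** G) ** A = B ** N"
    "C ** (G ** M) ** Ci = N ** B"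
  unfolding G_def M_def by (simp_all add: isimps)

lemma tset_eq: "tset A B C S = T S"
proof
  show "tset A B C S \<subseteq> T S"
  proof
    fix G assume "G \<in> tset A B C S"
    then obtain N where N: "N \<in> ginv S B" and G: "G = Ci ** N ** Ai"
      by (auto simp: tset_def Ai_def Ci_def)
    show "G \<in> T S" using N unfolding T_mem h3_def h4_def G transfer
      by (auto simp: ginv_def M_def)
  qed
next
  show "T S \<subseteq> tset A B C S"
  proof
    fix G assume G: "G \<in> T S"
    define N where "N = C ** G ** A"
    have GN: "G = Ci ** N ** Ai" by (simp add: N_def isimps)
    have "N \<in> ginv S B"
      using G unfolding GN T_mem h3_def h4_def transfer
      by (auto simp: ginv_def M_def intro: cancelAC cancelCA)
    thus "G \<in> tset A B C S" unfolding tset_def GN Ai_def Ci_def by blast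
  qed
qed

end


context thm_ctx begin

lemma mpM: "M ** Mp ** M = M" "Mp ** M ** Mp = Mp" "adj P = P" "adj Q = Q"
  using mpinv_props[of M] by (auto simp: Mp_def P_def Q_def)

lemma PQ: "P ** M = M" "M ** Q = M" "Q ** Mp = Mp" "Mp ** P = Mp"
  "X ** M ** Mp ** M = X ** M" "Y ** Mp ** M ** Mp = Y ** Mp"
proof -
  show "P ** M = M" using mpM(1) by (simp add: P_def)
  show "M ** Q = M" using mpM(1) by (simp add: Q_def matrix_mul_assoc)
  show "Q ** Mp = Mp" using mpM(2) by (simp add: Q_def)
  show "Mp ** P = Mp" using mpM(2) by (simp add: P_def matrix_mul_assoc)
  have "X ** M ** Mp ** M = X ** (M ** Mp ** M)" by (simp add: matrix_mul_assoc)
  thus "X ** M ** Mp ** M = X ** M" using mpM(1) by simp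
  have "Y ** Mp ** M ** Mp = Y ** (Mp ** M ** Mp)" by (simp add: matrix_mul_assoc)
  thus "Y ** Mp ** M ** Mp = Y ** Mp" using mpM(2) by simp
qed

lemma l13: assumes "M ** G ** M = M" "adj (M ** G) = M ** G" shows "M ** G = P"
proof -
  have 1: "M ** G = P ** (M ** G)" using PQ(1) by (simp add: matrix_mul_assoc)
  have 2: "adj (M ** G ** P) = P ** (M ** G)" using assms(2) mpM(3) adj_mult[of "M ** G" P] by simp
  have 3: "M ** G ** P = P" using assms(1) by (simp add: P_def matrix_mul_assoc)
  show ?thesis using 1 2 3 mpM(3) by simp
qed

lemma l14: assumes "M ** G ** M = M" "adj (G ** M) = G ** M" shows "G ** M = Q"
proof -
  have 1: "G ** M = G ** M ** Q" using PQ(2) by (simp add: matrix_mul_assoc[symmetric])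
  have 2: "adj (Q ** (G ** M)) = G ** M ** Q" using assms(2) mpM(4) adj_mult[of Q "G ** M"] by simp
  have 3: "Q ** (G ** M) = Q" using assms(1) by (simp add: Q_def matrix_mul_assoc[symmetric])
  show ?thesis using 1 2 3 mpM(4) by simp
qed

lemma H_char: "G \<in> H \<longleftrightarrow> M ** G ** M = M \<and> M ** G = P \<and> G ** M = Q"
proof
  assume "G \<in> H"
  hence g: "M ** G ** M = M" "adj (M ** G) = M ** G" "adj (G ** M) = G ** M" by (auto simp: H_def ginv_def)
  show "M ** G ** M = M \<and> M ** G = P \<and> G ** M = Q" using g l13[OF g(1,2)] l14[OF g(1,3)] by simp
next
  assume g: "M ** G ** M = M \<and> M ** G = P \<and> G ** M = Q"
  thus "G \<in> H" using mpM(3,4) PQ(1) by (simp add: H_def ginv_def)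
qed

lemma Mp_H: "Mp \<in> H" unfolding H_char using mpM by (simp add: P_def Q_def)

lemma H_GMG: "G \<in> H \<Longrightarrow> G ** M ** G = Mp"
proof -
  assume "G \<in> H"
  hence h: "M ** G = P" "G ** M = Q" unfolding H_char by auto
  have "G ** M ** G = G ** (M ** G)" by (simp add: matrix_mul_assoc)
  also have "\<dots> = G ** M ** Mp" using h(1) by (simp add: P_def matrix_mul_assoc)
  also have "\<dots> = Mp" using h(2) mpM(2) by (simp add: Q_def)
  finally show ?thesis .
qed

lemma G0_T: "G0 \<in> T {1,2,3,4}"
proof -
  have "G0 \<in> tset A B C {1,2,3,4}" unfolding tset_def G0_def Bp_def Ai_def Ci_def
    using mpinv_ginv[of B] by blast
  thus ?thesis using tset_eq by simp
qed

lemma h3_P: "M ** G = P \<Longrightarrow> h3 G \<longleftrightarrow> r1" by (simp add: h3_def r1_def matrix_mul_assoc)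
lemma h4_Q: "G ** M = Q \<Longrightarrow> h4 G \<longleftrightarrow> r2" by (simp add: h4_def r2_def matrix_mul_assoc)

lemma comm1: assumes "M ** G ** M = M" "h3 G" "r1" shows "M ** G = P"
proof -
  let ?X = "Ai ** (M ** G) ** A" and ?Y = "Ai ** P ** A"
  have "?X ** ?Y = Ai ** (M ** G ** M ** Mp) ** A" by (simp add: isimps P_def M_def)
  hence xy: "?X ** ?Y = ?Y" using assms(1) by (simp add: P_def)
  have "?Y ** ?X = Ai ** (M ** Mp ** M ** G) ** A" by (simp add: isimps P_def M_def)
  hence yx: "?Y ** ?X = ?X" using mpM(1) by simp
  have "?X = ?Y" using herm_eq1[OF _ _ xy yx] assms(2,3) by (simp add: h3_def r1_def)
  hence "A ** ?X ** Ai = A ** ?Y ** Ai" by simp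
  thus ?thesis by (simp add: isimps)
qed

lemma comm2: assumes "M ** G ** M = M" "h4 G" "r2" shows "G ** M = Q"
proof -
  let ?X = "C ** (G ** M) ** Ci" and ?Y = "C ** Q ** Ci"
  have "?X ** ?Y = C ** (G ** M ** Mp ** M) ** Ci" by (simp add: isimps Q_def M_def)
  hence xy: "?X ** ?Y = ?X" using PQ(5)[of G] by (simp only:)
  have "?Y ** ?X = C ** (Mp ** (M ** G ** M)) ** Ci" by (simp add: isimps Q_def M_def)
  hence yx: "?Y ** ?X = ?Y" using assms(1) by (simp add: Q_def matrix_mul_assoc)
  have "?X = ?Y" using herm_eq2[OF _ _ xy yx] assms(2,3) by (simp add: h4_def r2_def)
  hence "Ci ** ?X ** C = Ci ** ?Y ** C" by simp
  thus ?thesis by (simp add: isimps)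
qed

lemma pI_MG: assumes "M ** G ** M = M" "P = mat 1" shows "M ** G = P"
proof -
  have "M ** G = M ** G ** P" using assms(2) by simp
  also have "\<dots> = P" using assms(1) by (simp add: P_def matrix_mul_assoc)
  finally show ?thesis .
qed
lemma qI_GM: assumes "M ** G ** M = M" "Q = mat 1" shows "G ** M = Q"
proof -
  have "G ** M = Q ** (G ** M)" using assms(2) by simp
  also have "\<dots> = Q" using assms(1) by (simp add: Q_def matrix_mul_assoc[symmetric])
  finally show ?thesis .
qed

lemma M0: "M = 0 \<longleftrightarrow> B = 0"
proof
  assume "M = 0"
  hence "Ai ** M ** Ci = 0" by simp
  thus "B = 0" by (simp add: isimps M_def)
next
  assume "B = 0" thus "M = 0" unfolding M_def by simp
qed

lemma M0_PQ: "M = 0 \<Longrightarrow> P = 0 \<and> Q = 0" by (simp add: P_def Q_def)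

lemma mat1_nz: "(mat 1 :: complex^'k^'k) \<noteq> 0"
proof
  assume "(mat 1 :: complex^'k^'k) = 0"
  hence "(mat 1 :: complex^'k^'k) $ undefined $ undefined = 0" by simp
  thus False by (simp add: mat_def)
qed

lemma rank_m: "rank B = CARD('m) \<longleftrightarrow> P = mat 1"
proof
  assume "rank B = CARD('m)"
  then obtain R where R: "B ** R = mat 1" using rank_full_rows by blast
  have "M ** (Ci ** R ** Ai) = A ** (B ** R) ** Ai" by (simp add: isimps M_def)
  hence "M ** (Ci ** R ** Ai) = mat 1" using R AAi by simp
  hence "P ** (M ** (Ci ** R ** Ai)) = P" by simp
  thus "P = mat 1" using PQ(1) \<open>M ** (Ci ** R ** Ai) = mat 1\<close> by (simp add: matrix_mul_assoc)
next
  assume p: "P = mat 1"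
  have "B ** (C ** Mp ** A) = Ai ** P ** A" by (simp add: isimps P_def M_def)
  hence "B ** (C ** Mp ** A) = mat 1" using p AAi by simp
  thus "rank B = CARD('m)" using rank_full_rows by blast
qed

lemma rank_n: "rank B = CARD('n) \<longleftrightarrow> Q = mat 1"
proof
  assume "rank B = CARD('n)"
  then obtain L where L: "L ** B = mat 1" using rank_full_cols by blast
  have "(Ci ** L ** Ai) ** M = Ci ** (L ** B) ** C" by (simp add: isimps M_def)
  hence "(Ci ** L ** Ai) ** M = mat 1" using L AAi by simp
  hence "((Ci ** L ** Ai) ** M) ** Q = Q" by simp
  thus "Q = mat 1" using PQ(2) \<open>(Ci ** L ** Ai) ** M = mat 1\<close> by (simp add: matrix_mul_assoc[symmetric])
next
  assume q: "Q = mat 1"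
  have "(C ** Mp ** A) ** B = C ** Q ** Ci" by (simp add: isimps Q_def M_def)
  hence "(C ** Mp ** A) ** B = mat 1" using q AAi by simp
  thus "rank B = CARD('n)" using rank_full_cols by blast
qed

end


context thm_ctx begin

lemma G0_props: "M ** G0 ** M = M" "G0 ** M ** G0 = G0" "h3 G0" "h4 G0"
  using G0_T by (auto simp: T_mem)

lemma MG0: "M ** G0 = A ** (B ** Bp) ** Ai" by (simp add: G0_def M_def isimps)
lemma G0M: "G0 ** M = Ci ** (Bp ** B) ** C" by (simp add: G0_def M_def isimps)

lemma Bp_props: "B ** Bp ** B = B" "Bp ** B ** Bp = Bp" "adj (B ** Bp) = B ** Bp" "adj (Bp ** B) = Bp ** B"
  using mpinv_props[of B] by (auto simp: Bp_def)

lemma adjinv: "adj Ai ** adj A = mat 1" "adj A ** adj Ai = mat 1"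
  "adj Ci ** adj C = mat 1" "adj C ** adj Ci = mat 1"
  using arg_cong[OF AAi(1), of adj] arg_cong[OF AAi(2), of adj]
    arg_cong[OF AAi(3), of adj] arg_cong[OF AAi(4), of adj] by (simp_all add: adj_mult)

lemma adjinv_r: "X ** adj Ai ** adj A = X" "Y ** adj C ** adj Ci = Y"
proof -
  show "X ** adj Ai ** adj A = X" using adjinv(1) by (simp add: matrix_mul_assoc[symmetric])
  show "Y ** adj C ** adj Ci = Y" using adjinv(4) by (simp add: matrix_mul_assoc[symmetric])
qed

lemma r1_MG0: "r1 \<longleftrightarrow> M ** G0 = P"
  using comm1[OF G0_props(1,3)] h3_P G0_props(3) by blast

lemma r2_G0M: "r2 \<longleftrightarrow> G0 ** M = Q"
  using comm2[OF G0_props(1,4)] h4_Q G0_props(4) by blast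

lemma r1_R1: "r1 \<longleftrightarrow> colspace (adj A ** A ** B) = colspace B"
proof -
  have "r1 \<longleftrightarrow> adj (M ** G0) = M ** G0"
    using r1_MG0 l13[OF G0_props(1)] mpM(3) by auto
  also have "\<dots> \<longleftrightarrow> adj (A ** (B ** Bp) ** Ai) = A ** (B ** Bp) ** Ai" by (simp add: MG0)
  also have "\<dots> \<longleftrightarrow> adj A ** A ** (B ** Bp) = (B ** Bp) ** (adj A ** A)"
    by (rule herm_conj_comm[OF AAi(1,2) Bp_props(3)])
  also have "\<dots> \<longleftrightarrow> colspace (adj A ** A ** B) = colspace B"
  proof (rule comm_colspace[OF Bp_props(1,3)])
    show "adj (adj A ** A) = adj A ** A" by (simp add: adj_mult)
    show "adj A ** A ** (Ai ** adj Ai) = mat 1"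
      by (simp add: matrix_mul_assoc inv_rules adjinv)
    show "Ai ** adj Ai ** (adj A ** A) = mat 1"
      by (simp add: matrix_mul_assoc adjinv_r AAi)
  qed
  finally show ?thesis .
qed

lemma r2_R2: "r2 \<longleftrightarrow> colspace (C ** adj C ** adj B) = colspace (adj B)"
proof -
  let ?F = "Bp ** B"
  have F: "adj B ** adj Bp = ?F" using Bp_props(4) by (simp add: adj_mult)
  have "r2 \<longleftrightarrow> adj (G0 ** M) = G0 ** M"
    using r2_G0M l14[OF G0_props(1)] mpM(4) by auto
  also have "\<dots> \<longleftrightarrow> adj (Ci ** ?F ** C) = Ci ** ?F ** C" by (simp add: G0M)
  also have "\<dots> \<longleftrightarrow> adj (adj C ** ?F ** adj Ci) = adj C ** ?F ** adj Ci"
  proof -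
    have e: "adj (Ci ** ?F ** C) = adj C ** ?F ** adj Ci"
      using Bp_props(4) by (simp add: adj_mult matrix_mul_assoc)
    have e2: "adj (adj C ** ?F ** adj Ci) = Ci ** ?F ** C"
      using arg_cong[OF e, of adj] by simp
    show ?thesis unfolding e e2 by auto
  qed
  also have "\<dots> \<longleftrightarrow> adj (adj C) ** adj C ** ?F = ?F ** (adj (adj C) ** adj C)"
    by (rule herm_conj_comm[OF adjinv(4,3) Bp_props(4)])
  also have "\<dots> \<longleftrightarrow> C ** adj C ** (adj B ** adj Bp) = (adj B ** adj Bp) ** (C ** adj C)"
    unfolding F by simp
  also have "\<dots> \<longleftrightarrow> colspace (C ** adj C ** adj B) = colspace (adj B)"
  proof (rule comm_colspace)
    show "adj B ** adj Bp ** adj B = adj B"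
      using arg_cong[OF Bp_props(1), of adj] by (simp add: adj_mult matrix_mul_assoc)
    show "adj (adj B ** adj Bp) = adj B ** adj Bp" using F Bp_props(4) by simp
    show "adj (C ** adj C) = C ** adj C" by (simp add: adj_mult)
    show "C ** adj C ** (adj Ci ** Ci) = mat 1"
      by (simp add: matrix_mul_assoc adjinv_r AAi)
    show "adj Ci ** Ci ** (C ** adj C) = mat 1"
      by (simp add: matrix_mul_assoc inv_rules adjinv)
  qed
  finally show ?thesis .
qed

end


context thm_ctx begin

lemma MIQ: "M ** (mat 1 - Q) = 0" by (simp add: matrix_diff_ldistrib PQ(2))
lemma IPM: "(mat 1 - P) ** M = 0" by (simp add: matrix_diff_rdistrib PQ(1))
lemma PP: "P ** P = P" using mpM(1) by (simp add: P_def matrix_mul_assoc)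
lemma QQ: "Q ** Q = Q" using mpM(2) by (simp add: Q_def matrix_mul_assoc)

definition "W1 W = Mp + (mat 1 - Q) ** W ** P"
definition "W2 W = Mp + Q ** W ** (mat 1 - P)"
definition "W3 W = Mp + (mat 1 - Q) ** W ** (mat 1 - P)"

lemma W1: "M ** W1 W = P" "W1 W ** M = Q + (mat 1 - Q) ** W ** M" "W1 W \<in> T {1,2}"
proof -
  have a: "M ** ((mat 1 - Q) ** W ** P) = 0"
    by (simp add: matrix_mul_assoc MIQ)
  show mg: "M ** W1 W = P" unfolding W1_def by (simp add: matrix_add_ldistrib a P_def[symmetric])
  have b: "(mat 1 - Q) ** W ** P ** M = (mat 1 - Q) ** W ** M"
    by (simp add: matrix_mul_assoc[symmetric] PQ(1))
  show gm: "W1 W ** M = Q + (mat 1 - Q) ** W ** M"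
    unfolding W1_def by (simp add: matrix_add_rdistrib' b Q_def[symmetric])
  have c: "(mat 1 - Q) ** W ** P ** P = (mat 1 - Q) ** W ** P"
    by (simp add: matrix_mul_assoc[symmetric] PP)
  have "M ** W1 W ** M = M" using mg PQ(1) by simp
  moreover have "W1 W ** M ** W1 W = W1 W"
  proof -
    have "W1 W ** M ** W1 W = W1 W ** P" using mg by (simp add: matrix_mul_assoc[symmetric])
    also have "\<dots> = W1 W" unfolding W1_def by (simp add: matrix_add_rdistrib' c PQ(4))
    finally show ?thesis .
  qed
  ultimately show "W1 W \<in> T {1,2}" by (simp add: T_mem)
qed

lemma W2: "M ** W2 W = P + M ** W ** (mat 1 - P)" "W2 W ** M = Q" "W2 W \<in> T {1,2}"
proof -
  have a: "Q ** W ** (mat 1 - P) ** M = 0"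
    by (simp add: matrix_mul_assoc[symmetric] IPM)
  show gm: "W2 W ** M = Q" unfolding W2_def by (simp add: matrix_add_rdistrib' a Q_def[symmetric])
  have b: "M ** (Q ** W ** (mat 1 - P)) = M ** W ** (mat 1 - P)"
    by (simp add: matrix_mul_assoc PQ(2))
  show "M ** W2 W = P + M ** W ** (mat 1 - P)"
    unfolding W2_def by (simp add: matrix_add_ldistrib b P_def[symmetric])
  have c: "Q ** (Q ** W ** (mat 1 - P)) = Q ** W ** (mat 1 - P)"
    by (simp add: matrix_mul_assoc QQ)
  have "M ** W2 W ** M = M" using gm PQ(2) by (simp add: matrix_mul_assoc[symmetric])
  moreover have "W2 W ** M ** W2 W = W2 W"
    unfolding gm unfolding W2_def by (simp add: matrix_add_ldistrib c PQ(3))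
  ultimately show "W2 W \<in> T {1,2}" by (simp add: T_mem)
qed

lemma W3: "W3 W \<in> H"
proof -
  have a: "M ** ((mat 1 - Q) ** W ** (mat 1 - P)) = 0" by (simp add: matrix_mul_assoc MIQ)
  have b: "(mat 1 - Q) ** W ** (mat 1 - P) ** M = 0" by (simp add: matrix_mul_assoc[symmetric] IPM)
  have mg: "M ** W3 W = P" unfolding W3_def by (simp add: matrix_add_ldistrib a P_def[symmetric])
  have gm: "W3 W ** M = Q" unfolding W3_def by (simp add: matrix_add_rdistrib' b Q_def[symmetric])
  show ?thesis unfolding H_char using mg gm PQ(1) by simp
qed

lemma W3_T12: "W3 W \<in> T {1,2} \<Longrightarrow> (mat 1 - Q) ** W ** (mat 1 - P) = 0"
proof -
  assume "W3 W \<in> T {1,2}"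
  hence "W3 W ** M ** W3 W = W3 W" by (simp add: T_mem)
  hence "Mp = W3 W" using H_GMG[OF W3] by simp
  thus ?thesis unfolding W3_def by simp
qed

lemma noQ: "M \<noteq> 0 \<Longrightarrow> (\<And>W. (mat 1 - Q) ** W ** M = 0) \<Longrightarrow> Q = mat 1"
  using zeroW[of "mat 1 - Q" M] by auto
lemma noP: "M \<noteq> 0 \<Longrightarrow> (\<And>W. M ** W ** (mat 1 - P) = 0) \<Longrightarrow> P = mat 1"
  using zeroW[of M "mat 1 - P"] by auto
lemma noPQ: "(\<And>W. (mat 1 - Q) ** W ** (mat 1 - P) = 0) \<Longrightarrow> P = mat 1 \<or> Q = mat 1"
  using zeroW[of "mat 1 - Q" "mat 1 - P"] by auto

lemma W1_H: "W1 W \<in> H \<Longrightarrow> (mat 1 - Q) ** W ** M = 0"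
  using W1(2)[of W] unfolding H_char by simp
lemma W2_H: "W2 W \<in> H \<Longrightarrow> M ** W ** (mat 1 - P) = 0"
  using W2(1)[of W] unfolding H_char by simp

lemma T_anti: "S \<subseteq> S' \<Longrightarrow> T S' \<subseteq> T S" by (auto simp: T_mem)

lemma H_T1: "H \<subseteq> T {1}" by (auto simp: T_mem H_char)

lemma M0_facts: "M = 0 \<Longrightarrow> r1 \<and> r2 \<and> H = UNIV"
  using M0_PQ by (auto simp: r1_def r2_def H_char)

lemma T12_H: assumes s: "T {1,2} \<subseteq> H" shows "M = 0 \<or> (P = mat 1 \<and> Q = mat 1)"
proof (cases "M = 0")
  case False
  hence nz: "M \<noteq> 0" .
  have "Q = mat 1" using noQ[OF nz] W1_H W1(3) s by blast
  moreover have "P = mat 1" using noP[OF nz] W2_H W2(3) s by blast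
  ultimately show ?thesis by simp
qed simp

lemma T1_H: "M = 0 \<or> (P = mat 1 \<and> Q = mat 1) \<Longrightarrow> T {1} \<subseteq> H"
  using M0_facts pI_MG qI_GM by (auto simp: T_mem H_char)

lemma H_T12: "H \<subseteq> T {1,2} \<longleftrightarrow> P = mat 1 \<or> Q = mat 1"
proof
  assume "H \<subseteq> T {1,2}"
  thus "P = mat 1 \<or> Q = mat 1" using noPQ W3 W3_T12 by blast
next
  assume pq: "P = mat 1 \<or> Q = mat 1"
  show "H \<subseteq> T {1,2}"
  proof
    fix G assume g: "G \<in> H"
    hence h: "M ** G ** M = M" "M ** G = P" "G ** M = Q" by (auto simp: H_char)
    have "G ** M ** G = G"
    proof (cases "P = mat 1")
      case True
      have "G ** M ** G = G ** (M ** G)" by (simp add: matrix_mul_assoc)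
      thus ?thesis using h(2) True by simp
    next
      case False thus ?thesis using h(3) pq by simp
    qed
    thus "G \<in> T {1,2}" using h by (simp add: T_mem)
  qed
qed

lemma MpP: "M ** Mp = P" "Mp ** M = Q" by (simp_all add: P_def Q_def)

lemma H_T13: "H \<subseteq> T {1,3} \<longleftrightarrow> r1"
proof
  assume "H \<subseteq> T {1,3}" hence "h3 Mp" using Mp_H by (auto simp: T_mem)
  thus r1 using h3_P[OF MpP(1)] by simp
next
  assume r1 thus "H \<subseteq> T {1,3}" using h3_P by (auto simp: T_mem H_char)
qed
lemma H_T13': "H \<inter> T {1,3} \<noteq> {} \<longleftrightarrow> r1"
proof
  assume "H \<inter> T {1,3} \<noteq> {}"
  then obtain G where "G \<in> H" "G \<in> T {1,3}" by blast
  thus r1 using h3_P by (auto simp: H_char T_mem)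
next
  assume r1 hence "Mp \<in> H \<inter> T {1,3}" using Mp_H h3_P[OF MpP(1)] mpM(1) by (auto simp: T_mem)
  thus "H \<inter> T {1,3} \<noteq> {}" by blast
qed
lemma H_T14: "H \<subseteq> T {1,4} \<longleftrightarrow> r2"
proof
  assume "H \<subseteq> T {1,4}" hence "h4 Mp" using Mp_H by (auto simp: T_mem)
  thus r2 using h4_Q[OF MpP(2)] by simp
next
  assume r2 thus "H \<subseteq> T {1,4}" using h4_Q by (auto simp: T_mem H_char)
qed
lemma H_T14': "H \<inter> T {1,4} \<noteq> {} \<longleftrightarrow> r2"
proof
  assume "H \<inter> T {1,4} \<noteq> {}"
  then obtain G where "G \<in> H" "G \<in> T {1,4}" by blast
  thus r2 using h4_Q by (auto simp: H_char T_mem)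
next
  assume r2 hence "Mp \<in> H \<inter> T {1,4}" using Mp_H h4_Q[OF MpP(2)] mpM(1) by (auto simp: T_mem)
  thus "H \<inter> T {1,4} \<noteq> {}" by blast
qed

lemma G0_H: "G0 \<in> H \<longleftrightarrow> r1 \<and> r2"
  using r1_MG0 r2_G0M G0_props(1) by (auto simp: H_char)

lemma T123_H: "T {1,2,3} \<subseteq> H \<longleftrightarrow> M = 0 \<or> (Q = mat 1 \<and> r1)"
proof
  assume s: "T {1,2,3} \<subseteq> H"
  show "M = 0 \<or> (Q = mat 1 \<and> r1)"
  proof (cases "M = 0")
    case False
    hence nz: "M \<noteq> 0" .
    have "G0 \<in> T {1,2,3}" using G0_T T_anti[of "{1,2,3}" "{1,2,3,4}"] by auto
    hence r: r1 using s r1_MG0 by (auto simp: H_char)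
    have "W1 W \<in> T {1,2,3}" for W using W1(1,3)[of W] h3_P r by (simp add: T_mem)
    hence "Q = mat 1" using noQ[OF nz] W1_H s by blast
    thus ?thesis using r by simp
  qed simp
next
  assume "M = 0 \<or> (Q = mat 1 \<and> r1)"
  thus "T {1,2,3} \<subseteq> H"
  proof
    assume "M = 0" thus ?thesis using M0_facts by simp
  next
    assume qr: "Q = mat 1 \<and> r1"
    show ?thesis
    proof
      fix G assume "G \<in> T {1,2,3}"
      hence g: "M ** G ** M = M" "h3 G" by (auto simp: T_mem)
      show "G \<in> H" unfolding H_char using g comm1[OF g] qI_GM[OF g(1)] qr by simp
    qed
  qed
qed

lemma T124_H: "T {1,2,4} \<subseteq> H \<longleftrightarrow> M = 0 \<or> (P = mat 1 \<and> r2)"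
proof
  assume s: "T {1,2,4} \<subseteq> H"
  show "M = 0 \<or> (P = mat 1 \<and> r2)"
  proof (cases "M = 0")
    case False
    hence nz: "M \<noteq> 0" .
    have "G0 \<in> T {1,2,4}" using G0_T T_anti[of "{1,2,4}" "{1,2,3,4}"] by auto
    hence r: r2 using s r2_G0M by (auto simp: H_char)
    have "W2 W \<in> T {1,2,4}" for W using W2(2,3)[of W] h4_Q r by (simp add: T_mem)
    hence "P = mat 1" using noP[OF nz] W2_H s by blast
    thus ?thesis using r by simp
  qed simp
next
  assume "M = 0 \<or> (P = mat 1 \<and> r2)"
  thus "T {1,2,4} \<subseteq> H"
  proof
    assume "M = 0" thus ?thesis using M0_facts by simp
  next
    assume pr: "P = mat 1 \<and> r2"
    show ?thesis
    proof
      fix G assume "G \<in> T {1,2,4}"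
      hence g: "M ** G ** M = M" "h4 G" by (auto simp: T_mem)
      show "G \<in> H" unfolding H_char using g comm2[OF g] pI_MG[OF g(1)] pr by simp
    qed
  qed
qed

lemma T13_H: "T {1,3} \<subseteq> H \<longleftrightarrow> M = 0 \<or> (Q = mat 1 \<and> r1)"
proof
  assume "T {1,3} \<subseteq> H"
  thus "M = 0 \<or> (Q = mat 1 \<and> r1)" using T123_H T_anti[of "{1,3}" "{1,2,3}"] by blast
next
  assume "M = 0 \<or> (Q = mat 1 \<and> r1)"
  thus "T {1,3} \<subseteq> H"
  proof
    assume "M = 0" thus ?thesis using M0_facts by simp
  next
    assume qr: "Q = mat 1 \<and> r1"
    show ?thesis
    proof
      fix G assume "G \<in> T {1,3}"
      hence g: "M ** G ** M = M" "h3 G" by (auto simp: T_mem)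
      show "G \<in> H" unfolding H_char using g comm1[OF g] qI_GM[OF g(1)] qr by simp
    qed
  qed
qed

lemma T14_H: "T {1,4} \<subseteq> H \<longleftrightarrow> M = 0 \<or> (P = mat 1 \<and> r2)"
proof
  assume "T {1,4} \<subseteq> H"
  thus "M = 0 \<or> (P = mat 1 \<and> r2)" using T124_H T_anti[of "{1,4}" "{1,2,4}"] by blast
next
  assume "M = 0 \<or> (P = mat 1 \<and> r2)"
  thus "T {1,4} \<subseteq> H"
  proof
    assume "M = 0" thus ?thesis using M0_facts by simp
  next
    assume pr: "P = mat 1 \<and> r2"
    show ?thesis
    proof
      fix G assume "G \<in> T {1,4}"
      hence g: "M ** G ** M = M" "h4 G" by (auto simp: T_mem)
      show "G \<in> H" unfolding H_char using g comm2[OF g] pI_MG[OF g(1)] pr by simp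
    qed
  qed
qed

lemma H_T123: "H \<inter> T {1,2,3} \<noteq> {} \<longleftrightarrow> r1"
proof
  assume "H \<inter> T {1,2,3} \<noteq> {}"
  then obtain G where "G \<in> H" "G \<in> T {1,2,3}" by blast
  thus r1 using h3_P by (auto simp: H_char T_mem)
next
  assume r1
  hence "Mp \<in> H \<inter> T {1,2,3}" using Mp_H h3_P mpM(2) by (auto simp: H_char T_mem)
  thus "H \<inter> T {1,2,3} \<noteq> {}" by blast
qed

lemma H_T124: "H \<inter> T {1,2,4} \<noteq> {} \<longleftrightarrow> r2"
proof
  assume "H \<inter> T {1,2,4} \<noteq> {}"
  then obtain G where "G \<in> H" "G \<in> T {1,2,4}" by blast
  thus r2 using h4_Q by (auto simp: H_char T_mem)
next
  assume r2
  hence "Mp \<in> H \<inter> T {1,2,4}" using Mp_H h4_Q mpM(2) by (auto simp: H_char T_mem)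
  thus "H \<inter> T {1,2,4} \<noteq> {}" by blast
qed

lemma T123_split: "T {1,2,3} = T {1,2} \<inter> T {1,3}" by (auto simp: T_mem)
lemma T124_split: "T {1,2,4} = T {1,2} \<inter> T {1,4}" by (auto simp: T_mem)

lemma H_T134: "H \<inter> T {1,3,4} \<noteq> {} \<longleftrightarrow> r1 \<and> r2" "r1 \<and> r2 \<longleftrightarrow> H = T {1,3,4}"
proof -
  have a: "H \<inter> T {1,3,4} \<noteq> {} \<Longrightarrow> r1 \<and> r2"
  proof -
    assume "H \<inter> T {1,3,4} \<noteq> {}"
    then obtain G where "G \<in> H" "G \<in> T {1,3,4}" by blast
    thus "r1 \<and> r2" using h3_P h4_Q by (auto simp: H_char T_mem)
  qed
  have b: "r1 \<and> r2 \<Longrightarrow> H = T {1,3,4}"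
  proof
    assume r: "r1 \<and> r2"
    show "H \<subseteq> T {1,3,4}" using r h3_P h4_Q by (auto simp: H_char T_mem)
    show "T {1,3,4} \<subseteq> H"
    proof
      fix G assume "G \<in> T {1,3,4}"
      hence g: "M ** G ** M = M" "h3 G" "h4 G" by (auto simp: T_mem)
      show "G \<in> H" unfolding H_char using g comm1[OF g(1,2)] comm2[OF g(1,3)] r by simp
    qed
  qed
  have c: "H = T {1,3,4} \<Longrightarrow> H \<inter> T {1,3,4} \<noteq> {}" using Mp_H by auto
  show "H \<inter> T {1,3,4} \<noteq> {} \<longleftrightarrow> r1 \<and> r2" using a b c by blast
  show "r1 \<and> r2 \<longleftrightarrow> H = T {1,3,4}" using a b c by blast
qed

end


context thm_ctx begin

lemma z_npq: "M = 0 \<Longrightarrow> P \<noteq> mat 1 \<and> Q \<noteq> mat 1"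
  using M0_PQ mat1_nz by metis

lemma b49: "H \<subseteq> T {1} \<and> (T {1} \<subseteq> H \<longleftrightarrow> H = T {1})
  \<and> (H = T {1} \<longleftrightarrow> M = 0 \<or> (P = mat 1 \<and> Q = mat 1))"
proof -
  have a: "H = T {1} \<Longrightarrow> M = 0 \<or> (P = mat 1 \<and> Q = mat 1)"
    using T12_H T_anti[of "{1}" "{1,2}"] by auto
  show ?thesis using a H_T1 T1_H by blast
qed

lemma b50: "H \<inter> T {1,2} \<noteq> {}
  \<and> (T {1,2} \<subseteq> H \<longleftrightarrow> M = 0 \<or> (P = mat 1 \<and> Q = mat 1))
  \<and> (H \<subseteq> T {1,2} \<longleftrightarrow> P = mat 1 \<or> Q = mat 1)
  \<and> (H = T {1,2} \<longleftrightarrow> P = mat 1 \<and> Q = mat 1)"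
proof -
  have m: "Mp \<in> H \<inter> T {1,2}" using Mp_H mpM by (auto simp: T_mem)
  have s: "T {1,2} \<subseteq> H \<longleftrightarrow> M = 0 \<or> (P = mat 1 \<and> Q = mat 1)"
    using T12_H T1_H T_anti[of "{1}" "{1,2}"] by blast
  show ?thesis using m s H_T12 z_npq by blast
qed

lemma b51: "(H \<inter> T {1,3} \<noteq> {} \<longleftrightarrow> H \<subseteq> T {1,3})
  \<and> (H \<subseteq> T {1,3} \<longleftrightarrow> r1)
  \<and> (T {1,3} \<subseteq> H \<longleftrightarrow> H = T {1,3})
  \<and> (H = T {1,3} \<longleftrightarrow> M = 0 \<or> (Q = mat 1 \<and> r1))"
proof -
  have r: "M = 0 \<or> (Q = mat 1 \<and> r1) \<Longrightarrow> r1" using M0_facts by blast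
  show ?thesis using H_T13 H_T13' T13_H r by blast
qed

lemma b52: "(H \<inter> T {1,4} \<noteq> {} \<longleftrightarrow> H \<subseteq> T {1,4})
  \<and> (H \<subseteq> T {1,4} \<longleftrightarrow> r2)
  \<and> (T {1,4} \<subseteq> H \<longleftrightarrow> H = T {1,4})
  \<and> (H = T {1,4} \<longleftrightarrow> M = 0 \<or> (P = mat 1 \<and> r2))"
proof -
  have r: "M = 0 \<or> (P = mat 1 \<and> r2) \<Longrightarrow> r2" using M0_facts by blast
  show ?thesis using H_T14 H_T14' T14_H r by blast
qed

lemma b53: "(H \<inter> T {1,2,3} \<noteq> {} \<longleftrightarrow> r1)
  \<and> (T {1,2,3} \<subseteq> H \<longleftrightarrow> M = 0 \<or> (Q = mat 1 \<and> r1))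
  \<and> (H \<subseteq> T {1,2,3} \<longleftrightarrow> r1 \<and> (P = mat 1 \<or> Q = mat 1))
  \<and> (H = T {1,2,3} \<longleftrightarrow> Q = mat 1 \<and> r1)"
proof -
  have s: "H \<subseteq> T {1,2,3} \<longleftrightarrow> r1 \<and> (P = mat 1 \<or> Q = mat 1)"
    unfolding T123_split using H_T12 H_T13 by blast
  show ?thesis using s H_T123 T123_H z_npq by blast
qed

lemma b54: "(H \<inter> T {1,2,4} \<noteq> {} \<longleftrightarrow> r2)
  \<and> (T {1,2,4} \<subseteq> H \<longleftrightarrow> M = 0 \<or> (P = mat 1 \<and> r2))
  \<and> (H \<subseteq> T {1,2,4} \<longleftrightarrow> r2 \<and> (P = mat 1 \<or> Q = mat 1))
  \<and> (H = T {1,2,4} \<longleftrightarrow> P = mat 1 \<and> r2)"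
proof -
  have s: "H \<subseteq> T {1,2,4} \<longleftrightarrow> r2 \<and> (P = mat 1 \<or> Q = mat 1)"
    unfolding T124_split using H_T12 H_T14 by blast
  show ?thesis using s H_T124 T124_H z_npq by blast
qed

lemma b55: "(H \<inter> T {1,3,4} \<noteq> {} \<longleftrightarrow> H = T {1,3,4}) \<and> (H = T {1,3,4} \<longleftrightarrow> r1 \<and> r2)"
  using H_T134 by blast

lemma main:
  "(ginv {1,3,4} (A ** B ** C) \<subseteq> tset A B C {1}
    \<and> (ginv {1,3,4} (A ** B ** C) \<supseteq> tset A B C {1} \<longleftrightarrow> ginv {1,3,4} (A ** B ** C) = tset A B C {1})
    \<and> (ginv {1,3,4} (A ** B ** C) = tset A B C {1} \<longleftrightarrow> B = 0 \<or> (rank B = CARD('m) \<and> CARD('m) = CARD('n))))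
 \<and> (ginv {1,3,4} (A ** B ** C) \<inter> tset A B C {1,2} \<noteq> {}
    \<and> (ginv {1,3,4} (A ** B ** C) \<supseteq> tset A B C {1,2} \<longleftrightarrow> B = 0 \<or> (rank B = CARD('m) \<and> CARD('m) = CARD('n)))
    \<and> (ginv {1,3,4} (A ** B ** C) \<subseteq> tset A B C {1,2} \<longleftrightarrow> rank B = CARD('m) \<or> rank B = CARD('n))
    \<and> (ginv {1,3,4} (A ** B ** C) = tset A B C {1,2} \<longleftrightarrow> rank B = CARD('m) \<and> CARD('m) = CARD('n)))
 \<and> ((ginv {1,3,4} (A ** B ** C) \<inter> tset A B C {1,3} \<noteq> {} \<longleftrightarrow> ginv {1,3,4} (A ** B ** C) \<subseteq> tset A B C {1,3})
    \<and> (ginv {1,3,4} (A ** B ** C) \<subseteq> tset A B C {1,3} \<longleftrightarrow> colspace (adj A ** A ** B) = colspace B)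
    \<and> (ginv {1,3,4} (A ** B ** C) \<supseteq> tset A B C {1,3} \<longleftrightarrow> ginv {1,3,4} (A ** B ** C) = tset A B C {1,3})
    \<and> (ginv {1,3,4} (A ** B ** C) = tset A B C {1,3} \<longleftrightarrow>
         B = 0 \<or> (rank B = CARD('n) \<and> colspace (adj A ** A ** B) = colspace B)))
 \<and> ((ginv {1,3,4} (A ** B ** C) \<inter> tset A B C {1,4} \<noteq> {} \<longleftrightarrow> ginv {1,3,4} (A ** B ** C) \<subseteq> tset A B C {1,4})
    \<and> (ginv {1,3,4} (A ** B ** C) \<subseteq> tset A B C {1,4} \<longleftrightarrow> colspace (C ** adj C ** adj B) = colspace (adj B))
    \<and> (ginv {1,3,4} (A ** B ** C) \<supseteq> tset A B C {1,4} \<longleftrightarrow> ginv {1,3,4} (A ** B ** C) = tset A B C {1,4})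
    \<and> (ginv {1,3,4} (A ** B ** C) = tset A B C {1,4} \<longleftrightarrow>
         B = 0 \<or> (rank B = CARD('m) \<and> colspace (C ** adj C ** adj B) = colspace (adj B))))
 \<and> ((ginv {1,3,4} (A ** B ** C) \<inter> tset A B C {1,2,3} \<noteq> {} \<longleftrightarrow> colspace (adj A ** A ** B) = colspace B)
    \<and> (ginv {1,3,4} (A ** B ** C) \<supseteq> tset A B C {1,2,3} \<longleftrightarrow>
         B = 0 \<or> (rank B = CARD('n) \<and> colspace (adj A ** A ** B) = colspace B))
    \<and> (ginv {1,3,4} (A ** B ** C) \<subseteq> tset A B C {1,2,3} \<longleftrightarrow>
         colspace (adj A ** A ** B) = colspace B \<and> rank B = min CARD('m) CARD('n))
    \<and> (ginv {1,3,4} (A ** B ** C) = tset A B C {1,2,3} \<longleftrightarrow>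
         rank B = CARD('n) \<and> colspace (adj A ** A ** B) = colspace B))
 \<and> ((ginv {1,3,4} (A ** B ** C) \<inter> tset A B C {1,2,4} \<noteq> {} \<longleftrightarrow> colspace (C ** adj C ** adj B) = colspace (adj B))
    \<and> (ginv {1,3,4} (A ** B ** C) \<supseteq> tset A B C {1,2,4} \<longleftrightarrow>
         B = 0 \<or> (rank B = CARD('m) \<and> colspace (C ** adj C ** adj B) = colspace (adj B)))
    \<and> (ginv {1,3,4} (A ** B ** C) \<subseteq> tset A B C {1,2,4} \<longleftrightarrow>
         colspace (C ** adj C ** adj B) = colspace (adj B) \<and> rank B = min CARD('m) CARD('n))
    \<and> (ginv {1,3,4} (A ** B ** C) = tset A B C {1,2,4} \<longleftrightarrow>
         rank B = CARD('m) \<and> colspace (C ** adj C ** adj B) = colspace (adj B)))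
 \<and> ((ginv {1,3,4} (A ** B ** C) \<inter> tset A B C {1,3,4} \<noteq> {} \<longleftrightarrow> ginv {1,3,4} (A ** B ** C) = tset A B C {1,3,4})
    \<and> (ginv {1,3,4} (A ** B ** C) = tset A B C {1,3,4} \<longleftrightarrow>
         colspace (adj A ** A ** B) = colspace B \<and> colspace (C ** adj C ** adj B) = colspace (adj B)))
 \<and> (matrix_inv C ** mpinv B ** matrix_inv A \<in> ginv {1,3,4} (A ** B ** C) \<longleftrightarrow>
         colspace (adj A ** A ** B) = colspace B \<and> colspace (C ** adj C ** adj B) = colspace (adj B))"
proof -
  have Heq: "ginv {1,3,4} (A ** B ** C) = H" by (simp add: H_def M_def)
  have G0eq: "matrix_inv C ** mpinv B ** matrix_inv A = G0" by (simp add: G0_def Ai_def Bp_def Ci_def)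
  have e1: "(rank B = CARD('m) \<and> CARD('m) = CARD('n)) \<longleftrightarrow> P = mat 1 \<and> Q = mat 1"
    using rank_m rank_n by auto
  have e2: "rank B = min CARD('m) CARD('n) \<longleftrightarrow> P = mat 1 \<or> Q = mat 1"
    using rank_m rank_n rank_le_rows[of B] rank_le_cols[of B] by (auto simp: min_def)
  have e3: "(rank B = CARD('m) \<or> rank B = CARD('n)) \<longleftrightarrow> P = mat 1 \<or> Q = mat 1"
    using rank_m rank_n by auto
  show ?thesis
    unfolding e1 e2 e3
    unfolding Heq G0eq tset_eq rank_m rank_n M0[symmetric] r1_R1[symmetric] r2_R2[symmetric]
    by (rule conjI[OF b49 conjI[OF b50 conjI[OF b51 conjI[OF b52 conjI[OF b53 conjI[OF b54 conjI[OF b55 G0_H]]]]]]])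
qed

end

theorem theorem4p2:
  fixes A :: "complex^'m^'m" and B :: "complex^'n^'m" and C :: "complex^'n^'n"
  assumes "invertible A" and "invertible C"
  shows
  "(ginv {1,3,4} (A ** B ** C) \<subseteq> tset A B C {1}
    \<and> (ginv {1,3,4} (A ** B ** C) \<supseteq> tset A B C {1} \<longleftrightarrow> ginv {1,3,4} (A ** B ** C) = tset A B C {1})
    \<and> (ginv {1,3,4} (A ** B ** C) = tset A B C {1} \<longleftrightarrow> B = 0 \<or> (rank B = CARD('m) \<and> CARD('m) = CARD('n))))
 \<and> (ginv {1,3,4} (A ** B ** C) \<inter> tset A B C {1,2} \<noteq> {}
    \<and> (ginv {1,3,4} (A ** B ** C) \<supseteq> tset A B C {1,2} \<longleftrightarrow> B = 0 \<or> (rank B = CARD('m) \<and> CARD('m) = CARD('n)))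
    \<and> (ginv {1,3,4} (A ** B ** C) \<subseteq> tset A B C {1,2} \<longleftrightarrow> rank B = CARD('m) \<or> rank B = CARD('n))
    \<and> (ginv {1,3,4} (A ** B ** C) = tset A B C {1,2} \<longleftrightarrow> rank B = CARD('m) \<and> CARD('m) = CARD('n)))
 \<and> ((ginv {1,3,4} (A ** B ** C) \<inter> tset A B C {1,3} \<noteq> {} \<longleftrightarrow> ginv {1,3,4} (A ** B ** C) \<subseteq> tset A B C {1,3})
    \<and> (ginv {1,3,4} (A ** B ** C) \<subseteq> tset A B C {1,3} \<longleftrightarrow> colspace (adj A ** A ** B) = colspace B)
    \<and> (ginv {1,3,4} (A ** B ** C) \<supseteq> tset A B C {1,3} \<longleftrightarrow> ginv {1,3,4} (A ** B ** C) = tset A B C {1,3})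
    \<and> (ginv {1,3,4} (A ** B ** C) = tset A B C {1,3} \<longleftrightarrow>
         B = 0 \<or> (rank B = CARD('n) \<and> colspace (adj A ** A ** B) = colspace B)))
 \<and> ((ginv {1,3,4} (A ** B ** C) \<inter> tset A B C {1,4} \<noteq> {} \<longleftrightarrow> ginv {1,3,4} (A ** B ** C) \<subseteq> tset A B C {1,4})
    \<and> (ginv {1,3,4} (A ** B ** C) \<subseteq> tset A B C {1,4} \<longleftrightarrow> colspace (C ** adj C ** adj B) = colspace (adj B))
    \<and> (ginv {1,3,4} (A ** B ** C) \<supseteq> tset A B C {1,4} \<longleftrightarrow> ginv {1,3,4} (A ** B ** C) = tset A B C {1,4})
    \<and> (ginv {1,3,4} (A ** B ** C) = tset A B C {1,4} \<longleftrightarrow>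
         B = 0 \<or> (rank B = CARD('m) \<and> colspace (C ** adj C ** adj B) = colspace (adj B))))
 \<and> ((ginv {1,3,4} (A ** B ** C) \<inter> tset A B C {1,2,3} \<noteq> {} \<longleftrightarrow> colspace (adj A ** A ** B) = colspace B)
    \<and> (ginv {1,3,4} (A ** B ** C) \<supseteq> tset A B C {1,2,3} \<longleftrightarrow>
         B = 0 \<or> (rank B = CARD('n) \<and> colspace (adj A ** A ** B) = colspace B))
    \<and> (ginv {1,3,4} (A ** B ** C) \<subseteq> tset A B C {1,2,3} \<longleftrightarrow>
         colspace (adj A ** A ** B) = colspace B \<and> rank B = min CARD('m) CARD('n))
    \<and> (ginv {1,3,4} (A ** B ** C) = tset A B C {1,2,3} \<longleftrightarrow>
         rank B = CARD('n) \<and> colspace (adj A ** A ** B) = colspace B))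
 \<and> ((ginv {1,3,4} (A ** B ** C) \<inter> tset A B C {1,2,4} \<noteq> {} \<longleftrightarrow> colspace (C ** adj C ** adj B) = colspace (adj B))
    \<and> (ginv {1,3,4} (A ** B ** C) \<supseteq> tset A B C {1,2,4} \<longleftrightarrow>
         B = 0 \<or> (rank B = CARD('m) \<and> colspace (C ** adj C ** adj B) = colspace (adj B)))
    \<and> (ginv {1,3,4} (A ** B ** C) \<subseteq> tset A B C {1,2,4} \<longleftrightarrow>
         colspace (C ** adj C ** adj B) = colspace (adj B) \<and> rank B = min CARD('m) CARD('n))
    \<and> (ginv {1,3,4} (A ** B ** C) = tset A B C {1,2,4} \<longleftrightarrow>
         rank B = CARD('m) \<and> colspace (C ** adj C ** adj B) = colspace (adj B)))
 \<and> ((ginv {1,3,4} (A ** B ** C) \<inter> tset A B C {1,3,4} \<noteq> {} \<longleftrightarrow> ginv {1,3,4} (A ** B ** C) = tset A B C {1,3,4})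
    \<and> (ginv {1,3,4} (A ** B ** C) = tset A B C {1,3,4} \<longleftrightarrow>
         colspace (adj A ** A ** B) = colspace B \<and> colspace (C ** adj C ** adj B) = colspace (adj B)))
 \<and> (matrix_inv C ** mpinv B ** matrix_inv A \<in> ginv {1,3,4} (A ** B ** C) \<longleftrightarrow>
         colspace (adj A ** A ** B) = colspace B \<and> colspace (C ** adj C ** adj B) = colspace (adj B))"
proof -
  interpret thm_ctx A B C using assms by unfold_locales
  show ?thesis by (rule main)
qed


end
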